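(* For any $C>1$, any odd $d\ge3$, and any $\eta\ge2$, there exists a forward-KL-regularized linear bandit instance of dimension $d$ such that $C^{\pi^*}=O(C)$ and $D^2_{\pi^*}=\Omega(Cd)$; consequently $D^2_{\pi^*}=\Omega(d\,C^{\pi^*})$.
   Context: A forward-KL-regularized linear bandit instance (single context) consists of a finite action set $\mathcal A$, a feature map $\phi:\mathcal A\to\mathbb R^d$, a parameter set $\Theta\subset\mathbb R^d$ defining the function class $\mathcal F=\{a\mapsto\langle\theta,\phi(a)\rangle:\theta\in\Theta\}$, a true parameter $\theta^*\in\Theta$ with mean reward $r(a)=\langle\theta^*,\phi(a)\rangle\in[0,1]$, a reference policy $\pi^{\mathrm{ref}}\in\Delta(\mathcal A)$ with full support, and $\eta>0$. The optimal policy is $\pi^*=\arg\max_{\pi\in\Delta(\mathcal A)}\sum_a r(a)\pi(a)-\eta^{-1}\mathrm{KL}(\pi^{\mathrm{ref}}\|\pi)$. $C^{\pi^*}=\max_a\pi^*(a)/\pi^{\mathrm{ref}}(a)$; $D^2(a)=\sup_{g,h\in\mathcal F}\frac{(g(a)-h(a))^2}{\mathbb E_{a'\sim\pi^{\mathrm{ref}}}[(g(a')-h(a'))^2]}$; $D^2_{\pi^*}=\mathbb E_{a\sim\pi^*}D^2(a)$. $O,\Omega$ hide absolute constants. *)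

theory Defs
  imports "HOL-Analysis.Analysis"
begin

text \<open>Vectors in R^d are represented as functions nat => real; only coordinates i < d matter.
Actions are natural numbers drawn from a finite action set A.\<close>

definition inner_d :: "nat \<Rightarrow> (nat \<Rightarrow> real) \<Rightarrow> (nat \<Rightarrow> real) \<Rightarrow> real" where
  "inner_d d x y = (\<Sum>i<d. x i * y i)"

definition is_vec :: "nat \<Rightarrow> (nat \<Rightarrow> real) \<Rightarrow> bool" where
  "is_vec d x \<longleftrightarrow> (\<forall>i\<ge>d. x i = 0)"

definition is_dist :: "nat set \<Rightarrow> (nat \<Rightarrow> real) \<Rightarrow> bool" where
  "is_dist A p \<longleftrightarrow> (\<forall>a\<in>A. 0 \<le> p a) \<and> (\<forall>a. a \<notin> A \<longrightarrow> p a = 0) \<and> sum p A = 1"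

definition is_pos_dist :: "nat set \<Rightarrow> (nat \<Rightarrow> real) \<Rightarrow> bool" where
  "is_pos_dist A p \<longleftrightarrow> is_dist A p \<and> (\<forall>a\<in>A. 0 < p a)"

definition KL :: "nat set \<Rightarrow> (nat \<Rightarrow> real) \<Rightarrow> (nat \<Rightarrow> real) \<Rightarrow> real" where
  "KL A p q = (\<Sum>a\<in>A. p a * ln (p a / q a))"

definition reg_obj :: "nat set \<Rightarrow> (nat \<Rightarrow> real) \<Rightarrow> (nat \<Rightarrow> real) \<Rightarrow> real \<Rightarrow> (nat \<Rightarrow> real) \<Rightarrow> real" where
  "reg_obj A r pref \<eta> p = (\<Sum>a\<in>A. r a * p a) - KL A pref p / \<eta>"

text \<open>pi is an optimal policy. Policies not of full support have KL(pi_ref||pi) = +infinity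
(pi_ref has full support), so the argmax is over full-support policies.\<close>
definition is_opt_policy :: "nat set \<Rightarrow> (nat \<Rightarrow> real) \<Rightarrow> (nat \<Rightarrow> real) \<Rightarrow> real \<Rightarrow> (nat \<Rightarrow> real) \<Rightarrow> bool" where
  "is_opt_policy A r pref \<eta> p \<longleftrightarrow> is_pos_dist A p \<and>
     (\<forall>q. is_pos_dist A q \<longrightarrow> reg_obj A r pref \<eta> q \<le> reg_obj A r pref \<eta> p)"

definition lin_class :: "nat \<Rightarrow> (nat \<Rightarrow> nat \<Rightarrow> real) \<Rightarrow> (nat \<Rightarrow> real) set \<Rightarrow> (nat \<Rightarrow> real) set" where
  "lin_class d \<phi> \<Theta> = (\<lambda>\<theta>. \<lambda>a. inner_d d \<theta> (\<phi> a)) ` \<Theta>"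

definition conc_coef :: "nat set \<Rightarrow> (nat \<Rightarrow> real) \<Rightarrow> (nat \<Rightarrow> real) \<Rightarrow> real" where
  "conc_coef A pref p = Max ((\<lambda>a. p a / pref a) ` A)"

definition D2 :: "nat set \<Rightarrow> (nat \<Rightarrow> real) set \<Rightarrow> (nat \<Rightarrow> real) \<Rightarrow> nat \<Rightarrow> ereal" where
  "D2 A F pref a = (SUP gh \<in> F \<times> F. ereal ((fst gh a - snd gh a)^2 /
        (\<Sum>a'\<in>A. pref a' * (fst gh a' - snd gh a')^2)))"

definition D2_pi :: "nat set \<Rightarrow> (nat \<Rightarrow> real) set \<Rightarrow> (nat \<Rightarrow> real) \<Rightarrow> (nat \<Rightarrow> real) \<Rightarrow> ereal" where
  "D2_pi A F pref p = (\<Sum>a\<in>A. ereal (p a) * D2 A F pref a)"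

text \<open>A forward-KL-regularized linear bandit instance of dimension d (single context).\<close>
definition is_instance :: "nat \<Rightarrow> nat set \<Rightarrow> (nat \<Rightarrow> nat \<Rightarrow> real) \<Rightarrow> (nat \<Rightarrow> real) set
    \<Rightarrow> (nat \<Rightarrow> real) \<Rightarrow> (nat \<Rightarrow> real) \<Rightarrow> real \<Rightarrow> bool" where
  "is_instance d A \<phi> \<Theta> \<theta>s pref \<eta> \<longleftrightarrow>
     finite A \<and> A \<noteq> {} \<and> (\<forall>a\<in>A. is_vec d (\<phi> a)) \<and> (\<forall>\<theta>\<in>\<Theta>. is_vec d \<theta>) \<and>
     \<theta>s \<in> \<Theta> \<and> (\<forall>a\<in>A. 0 \<le> inner_d d \<theta>s (\<phi> a) \<and> inner_d d \<theta>s (\<phi> a) \<le> 1) \<and>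
     is_pos_dist A pref \<and> \<eta> > 0"

end

theory Submission
  imports Defs
begin

lemma opt_lemma:
  fixes A :: "nat set" and r pref p q :: "nat \<Rightarrow> real"
  assumes fin: "finite A" and pr: "is_pos_dist A pref" and pp: "is_pos_dist A p" and eta: "\<eta> > 0"
  and key: "\<And>a. a\<in>A \<Longrightarrow> pref a = \<eta>*(lam - r a) * p a"
  and pq: "is_pos_dist A q"
  shows "reg_obj A r pref \<eta> q \<le> reg_obj A r pref \<eta> p"
    and "(\<exists>a\<in>A. q a \<noteq> p a) \<Longrightarrow> reg_obj A r pref \<eta> q < reg_obj A r pref \<eta> p"
proof -
  have prp: "\<And>a. a\<in>A \<Longrightarrow> pref a > 0" and ppp: "\<And>a. a\<in>A \<Longrightarrow> p a > 0"
   and pqp: "\<And>a. a\<in>A \<Longrightarrow> q a > 0"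
    using pr pp pq unfolding is_pos_dist_def by auto
  have s1: "sum pref A = 1" "sum p A = 1" "sum q A = 1"
    using pr pp pq unfolding is_pos_dist_def is_dist_def by auto
  have KLd: "KL A pref q - KL A pref p = - (\<Sum>a\<in>A. pref a * ln (q a / p a))"
  proof -
    have "KL A pref q - KL A pref p = (\<Sum>a\<in>A. pref a * ln (pref a / q a) - pref a * ln (pref a / p a))"
      unfolding KL_def by (simp add: sum_subtractf)
    also have "\<dots> = (\<Sum>a\<in>A. - (pref a * ln (q a / p a)))"
    proof (rule sum.cong[OF refl])
      fix a assume a: "a \<in> A"
      have "ln (pref a / q a) = ln (pref a) - ln (q a)" "ln (pref a / p a) = ln (pref a) - ln (p a)"
        "ln (q a / p a) = ln (q a) - ln (p a)"
        using prp[OF a] ppp[OF a] pqp[OF a] by (simp_all add: ln_div)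
      thus "pref a * ln (pref a / q a) - pref a * ln (pref a / p a) = - (pref a * ln (q a / p a))"
        by (simp only:) (simp add: algebra_simps)
    qed
    finally show ?thesis by (simp add: sum_negf)
  qed
  have t1: "\<And>a. a\<in>A \<Longrightarrow> pref a * (q a / p a - 1) = \<eta>*lam*q a - \<eta>*(r a*q a) - pref a"
  proof -
    fix a assume a: "a \<in> A"
    have "pref a / p a = \<eta>*(lam - r a)" using key[OF a] ppp[OF a] by simp
    hence "pref a * (q a / p a) = \<eta>*(lam - r a) * q a" by (metis times_divide_eq_left times_divide_eq_right)
    thus "pref a * (q a / p a - 1) = \<eta>*lam*q a - \<eta>*(r a*q a) - pref a" by (simp add: algebra_simps)
  qed
  have t2: "\<And>a. a\<in>A \<Longrightarrow> pref a = \<eta>*lam*p a - \<eta>*(r a*p a)"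
    using key by (simp add: algebra_simps)
  have "sum pref A = (\<Sum>a\<in>A. \<eta>*lam*p a - \<eta>*(r a*p a))" using t2 by (rule sum.cong[OF refl])
  hence one: "1 = \<eta>*lam - \<eta>*(\<Sum>a\<in>A. r a * p a)"
    using s1 by (simp add: sum_subtractf sum_distrib_left[symmetric])
  have "(\<Sum>a\<in>A. pref a * (q a / p a - 1)) = (\<Sum>a\<in>A. \<eta>*lam*q a - \<eta>*(r a*q a) - pref a)"
    using t1 by (rule sum.cong[OF refl])
  also have "\<dots> = \<eta>*lam - \<eta>*(\<Sum>a\<in>A. r a * q a) - 1"
    using s1 by (simp add: sum_subtractf sum_distrib_left[symmetric])
  finally have S: "(\<Sum>a\<in>A. pref a * (q a / p a - 1)) = \<eta> * ((\<Sum>a\<in>A. r a * p a) - (\<Sum>a\<in>A. r a * q a))"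
    using one by (simp add: algebra_simps)
  have diff: "reg_obj A r pref \<eta> q - reg_obj A r pref \<eta> p =
     (\<Sum>a\<in>A. r a * q a) - (\<Sum>a\<in>A. r a * p a) + (\<Sum>a\<in>A. pref a * ln (q a / p a)) / \<eta>"
    using KLd unfolding reg_obj_def by (simp add: field_simps flip: add_divide_distrib)
  have le: "\<forall>a\<in>A. pref a * ln (q a / p a) \<le> pref a * (q a / p a - 1)"
    using prp ppp pqp by (auto intro!: mult_left_mono ln_le_minus_one)
  have L: "(\<Sum>a\<in>A. pref a * ln (q a / p a)) \<le> (\<Sum>a\<in>A. pref a * (q a / p a - 1))"
    using le by (simp add: sum_mono)
  show "reg_obj A r pref \<eta> q \<le> reg_obj A r pref \<eta> p"
  proof -
    have "(\<Sum>a\<in>A. pref a * ln (q a / p a)) / \<eta> \<le> (\<Sum>a\<in>A. r a * p a) - (\<Sum>a\<in>A. r a * q a)"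
      using L S eta by (simp add: divide_le_eq mult.commute)
    thus ?thesis using diff by linarith
  qed
  assume ex: "\<exists>a\<in>A. q a \<noteq> p a"
  have "\<exists>a\<in>A. pref a * ln (q a / p a) < pref a * (q a / p a - 1)"
  proof -
    from ex obtain a where a: "a\<in>A" "q a \<noteq> p a" by blast
    have "q a / p a \<noteq> 1" using a ppp[OF a(1)] by auto
    hence "ln (q a / p a) < q a / p a - 1"
      using ln_le_minus_one[of "q a / p a"] ln_eq_minus_one[of "q a / p a"] ppp[OF a(1)] pqp[OF a(1)]
      by force
    thus ?thesis using a prp[OF a(1)] mult_strict_left_mono by blast
  qed
  hence L2: "(\<Sum>a\<in>A. pref a * ln (q a / p a)) < (\<Sum>a\<in>A. pref a * (q a / p a - 1))"
    using sum_strict_mono_ex1[OF fin le] by blast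
  have "(\<Sum>a\<in>A. pref a * ln (q a / p a)) / \<eta> < (\<Sum>a\<in>A. r a * p a) - (\<Sum>a\<in>A. r a * q a)"
    using L2 S eta by (simp add: divide_less_eq mult.commute)
  thus "reg_obj A r pref \<eta> q < reg_obj A r pref \<eta> p" using diff by linarith
qed


lemma inner_onehot:
  "inner_d d x (\<lambda>i. if i = a \<and> a < d then 1 else 0) = (if a < d then x a else 0)"
  unfolding inner_d_def by (cases "a < d") (auto simp: if_distrib cong: if_cong)

lemma sum_atMost_split: "sum f {..(d::nat)} = sum f {..<d} + f d"
  by (simp add: lessThan_Suc_atMost[symmetric])

theorem propositionB1:
  shows "\<exists>c1>0. \<exists>c2>0. \<exists>c3>0. \<forall>C::real. \<forall>d::nat. \<forall>\<eta>::real.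
     C > 1 \<and> odd d \<and> d \<ge> 3 \<and> \<eta> \<ge> 2 \<longrightarrow>
     (\<exists>A \<phi> \<Theta> \<theta>s pref.
        is_instance d A \<phi> \<Theta> \<theta>s pref \<eta> \<and>
        (\<exists>p. is_opt_policy A (\<lambda>a. inner_d d \<theta>s (\<phi> a)) pref \<eta> p) \<and>
        (\<forall>p. is_opt_policy A (\<lambda>a. inner_d d \<theta>s (\<phi> a)) pref \<eta> p \<longrightarrow>
           conc_coef A pref p \<le> c1 * C \<and>
           D2_pi A (lin_class d \<phi> \<Theta>) pref p \<ge> ereal (c2 * C * real d) \<and>
           D2_pi A (lin_class d \<phi> \<Theta>) pref p \<ge> ereal (c3 * real d * conc_coef A pref p)))"
proof -
 have R: "\<forall>C::real. \<forall>d::nat. \<forall>\<eta>::real.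
     C > 1 \<and> odd d \<and> d \<ge> 3 \<and> \<eta> \<ge> 2 \<longrightarrow>
     (\<exists>A \<phi> \<Theta> \<theta>s pref.
        is_instance d A \<phi> \<Theta> \<theta>s pref \<eta> \<and>
        (\<exists>p. is_opt_policy A (\<lambda>a. inner_d d \<theta>s (\<phi> a)) pref \<eta> p) \<and>
        (\<forall>p. is_opt_policy A (\<lambda>a. inner_d d \<theta>s (\<phi> a)) pref \<eta> p \<longrightarrow>
           conc_coef A pref p \<le> 1 * C \<and>
           D2_pi A (lin_class d \<phi> \<Theta>) pref p \<ge> ereal (1 * C * real d) \<and>
           D2_pi A (lin_class d \<phi> \<Theta>) pref p \<ge> ereal (1 * real d * conc_coef A pref p)))"
 proof (intro allI impI)
  fix C :: real and d :: nat and \<eta> :: real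
  assume H: "1 < C \<and> odd d \<and> 3 \<le> d \<and> 2 \<le> \<eta>"
  hence C1: "1 < C" and d3: "3 \<le> d" and e2: "2 \<le> \<eta>" by auto
  have dpos: "real d > 0" using d3 by simp
  define s where "s = 1 / (2*C)"
  have s0: "0 < s" and s1: "s < 1/2" using C1 by (auto simp: s_def field_simps)
  define rh where "rh = 2 * (1 - 2 * s) / \<eta>"
  have rh0: "0 \<le> rh" and rh1: "rh \<le> 1" using s0 s1 e2 by (auto simp: rh_def field_simps)
  define A where "A = {..d}"
  define \<phi> where "\<phi> = (\<lambda>(a::nat) (i::nat). if i = a \<and> a < d then (1::real) else 0)"
  define \<theta>s where "\<theta>s = (\<lambda>i::nat. if i < d then rh else 0)"
  define \<Theta> where "\<Theta> = insert \<theta>s (insert (\<lambda>i. 0) (\<phi> ` {..<d}))"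
  define pref where "pref = (\<lambda>a::nat. if a < d then s / real d else if a = d then 1 - s else 0)"
  define p where "p = (\<lambda>a::nat. if a < d then 1 / (2 * real d) else if a = d then 1/2 else 0)"
  define r where "r = (\<lambda>a. inner_d d \<theta>s (\<phi> a))"
  have r_eq: "\<And>a. r a = (if a < d then rh else 0)"
    unfolding r_def \<phi>_def by (subst inner_onehot) (simp add: \<theta>s_def)
  have finA: "finite A" and neA: "A \<noteq> {}" unfolding A_def by auto
  have pref_pos: "is_pos_dist A pref"
  proof -
    have "sum pref A = 1"
      unfolding A_def sum_atMost_split using dpos by (simp add: pref_def)
    moreover have "\<forall>a\<in>A. 0 < pref a" using s0 s1 dpos by (auto simp: A_def pref_def)
    moreover have "\<forall>a. a \<notin> A \<longrightarrow> pref a = 0" by (auto simp: A_def pref_def)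
    ultimately show ?thesis unfolding is_pos_dist_def is_dist_def by auto
  qed
  have p_pos: "is_pos_dist A p"
  proof -
    have "sum p A = 1"
      unfolding A_def sum_atMost_split using dpos by (simp add: p_def)
    moreover have "\<forall>a\<in>A. 0 < p a" using dpos by (auto simp: A_def p_def)
    moreover have "\<forall>a. a \<notin> A \<longrightarrow> p a = 0" by (auto simp: A_def p_def)
    ultimately show ?thesis unfolding is_pos_dist_def is_dist_def by auto
  qed
  have eta0: "\<eta> > 0" using e2 by simp
  define lam where "lam = 2 * (1 - s) / \<eta>"
  have key: "\<And>a. a\<in>A \<Longrightarrow> pref a = \<eta>*(lam - r a) * p a"
  proof -
    fix a assume a: "a \<in> A"
    show "pref a = \<eta>*(lam - r a) * p a"
    proof (cases "a < d")
      case True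
      then show ?thesis using eta0 dpos
        by (simp add: pref_def p_def r_eq lam_def rh_def field_simps)
    next
      case False
      then have "a = d" using a by (simp add: A_def)
      then show ?thesis using eta0 dpos
        by (simp add: pref_def p_def r_eq lam_def rh_def field_simps)
    qed
  qed
  have popt: "is_opt_policy A r pref \<eta> p"
    unfolding is_opt_policy_def
    using p_pos opt_lemma(1)[OF finA pref_pos p_pos eta0 key] by blast
  have uniq: "q = p" if q: "is_opt_policy A r pref \<eta> q" for q
  proof -
    have qpos: "is_pos_dist A q" using q by (simp add: is_opt_policy_def)
    have "reg_obj A r pref \<eta> p \<le> reg_obj A r pref \<eta> q" using q p_pos by (simp add: is_opt_policy_def)
    hence "\<not> (\<exists>a\<in>A. q a \<noteq> p a)"
      using opt_lemma(2)[OF finA pref_pos p_pos eta0 key qpos] by force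
    moreover have "\<forall>a. a \<notin> A \<longrightarrow> q a = 0" "\<forall>a. a \<notin> A \<longrightarrow> p a = 0"
      using qpos p_pos by (auto simp: is_pos_dist_def is_dist_def)
    ultimately show ?thesis by (metis ext)
  qed
  have conc: "conc_coef A pref p \<le> C"
  proof -
    have "\<forall>a\<in>A. p a / pref a \<le> C"
    proof
      fix a assume a: "a \<in> A"
      show "p a / pref a \<le> C"
      proof (cases "a < d")
        case True
        then show ?thesis using dpos C1 by (simp add: p_def pref_def s_def field_simps)
      next
        case False
        then have "a = d" using a by (simp add: A_def)
        then show ?thesis using dpos C1 s1 by (simp add: p_def pref_def s_def field_simps)
      qed
    qed
    thus ?thesis unfolding conc_coef_def using finA neA by simp
  qed
  define F where "F = lin_class d \<phi> \<Theta>"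
  have D2nn: "0 \<le> D2 A F pref a" if "h \<in> F" for a h
  proof -
    have "ereal ((fst (h,h) a - snd (h,h) a)^2 / (\<Sum>a'\<in>A. pref a' * (fst (h,h) a' - snd (h,h) a')^2)) \<le> D2 A F pref a"
      unfolding D2_def by (rule SUP_upper) (use that in auto)
    thus ?thesis by (simp add: zero_ereal_def)
  qed
  have zF: "(\<lambda>b. inner_d d (\<lambda>i. 0) (\<phi> b)) \<in> F" unfolding F_def lin_class_def \<Theta>_def by blast
  have D2big: "ereal (2 * C * real d) \<le> D2 A F pref a" if a: "a < d" for a
  proof -
    define g where "g = (\<lambda>b. inner_d d (\<phi> a) (\<phi> b))"
    define h where "h = (\<lambda>b. inner_d d (\<lambda>i. 0) (\<phi> b))"
    have gF: "g \<in> F" unfolding g_def F_def lin_class_def \<Theta>_def using a by blast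
    have hF: "h \<in> F" using zF h_def by simp
    have g_eq: "\<And>b. g b = (if b = a then 1 else 0)"
      unfolding g_def \<phi>_def by (subst inner_onehot) (use a in auto)
    have h_eq: "\<And>b. h b = 0" unfolding h_def inner_d_def by simp
    have den: "(\<Sum>a'\<in>A. pref a' * (g a' - h a')^2) = s / real d"
    proof -
      have "(\<Sum>a'\<in>A. pref a' * (g a' - h a')^2) = (\<Sum>a'\<in>A. if a' = a then pref a else 0)"
        by (rule sum.cong) (auto simp: g_eq h_eq)
      also have "\<dots> = pref a" using a finA by (simp add: A_def)
      finally show ?thesis using a by (simp add: pref_def)
    qed
    have "ereal ((fst (g,h) a - snd (g,h) a)^2 / (\<Sum>a'\<in>A. pref a' * (fst (g,h) a' - snd (g,h) a')^2)) \<le> D2 A F pref a"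
      unfolding D2_def by (rule SUP_upper) (use gF hF in auto)
    moreover have "(fst (g,h) a - snd (g,h) a)^2 / (\<Sum>a'\<in>A. pref a' * (fst (g,h) a' - snd (g,h) a')^2) = 2 * C * real d"
      using den g_eq h_eq C1 by (simp add: s_def)
    ultimately show ?thesis by simp
  qed
  have D2p: "ereal (C * real d) \<le> D2_pi A F pref p"
  proof -
    have "\<forall>a\<in>A. ereal (if a < d then C else 0) \<le> ereal (p a) * D2 A F pref a"
    proof
      fix a assume a: "a \<in> A"
      show "ereal (if a < d then C else 0) \<le> ereal (p a) * D2 A F pref a"
      proof (cases "a < d")
        case True
        have le: "ereal (p a) * ereal (2 * C * real d) \<le> ereal (p a) * D2 A F pref a"
          by (rule ereal_mult_left_mono[OF D2big[OF True]]) (simp add: p_def)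
        have e: "ereal (p a) * ereal (2 * C * real d) = ereal C"
          using True dpos by (simp add: p_def)
        show ?thesis using True le[unfolded e] by simp
      next
        case False
        have "0 \<le> ereal (p a) * D2 A F pref a"
          using D2nn[OF zF, of a] by (simp add: p_def)
        thus ?thesis using False by (simp add: zero_ereal_def)
      qed
    qed
    hence "(\<Sum>a\<in>A. ereal (if a < d then C else 0)) \<le> D2_pi A F pref p"
      unfolding D2_pi_def by (simp add: sum_mono del: sum_ereal)
    moreover have "(\<Sum>a\<in>A. ereal (if a < d then C else 0)) = ereal (C * real d)"
      by (simp add: A_def sum_atMost_split)
    ultimately show ?thesis by simp
  qed
  have inst: "is_instance d A \<phi> \<Theta> \<theta>s pref \<eta>"
    unfolding is_instance_def
  proof (intro conjI finA neA pref_pos eta0)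
    show "\<forall>a\<in>A. is_vec d (\<phi> a)" by (auto simp: is_vec_def \<phi>_def)
    show "\<forall>\<theta>\<in>\<Theta>. is_vec d \<theta>" by (auto simp: is_vec_def \<phi>_def \<Theta>_def \<theta>s_def)
    show "\<theta>s \<in> \<Theta>" by (simp add: \<Theta>_def)
    show "\<forall>a\<in>A. 0 \<le> inner_d d \<theta>s (\<phi> a) \<and> inner_d d \<theta>s (\<phi> a) \<le> 1"
      using r_eq rh0 rh1 unfolding r_def by auto
  qed
  show "\<exists>A \<phi> \<Theta> \<theta>s pref.
        is_instance d A \<phi> \<Theta> \<theta>s pref \<eta> \<and>
        (\<exists>p. is_opt_policy A (\<lambda>a. inner_d d \<theta>s (\<phi> a)) pref \<eta> p) \<and>
        (\<forall>p. is_opt_policy A (\<lambda>a. inner_d d \<theta>s (\<phi> a)) pref \<eta> p \<longrightarrow>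
           conc_coef A pref p \<le> 1 * C \<and>
           D2_pi A (lin_class d \<phi> \<Theta>) pref p \<ge> ereal (1 * C * real d) \<and>
           D2_pi A (lin_class d \<phi> \<Theta>) pref p \<ge> ereal (1 * real d * conc_coef A pref p))"
  proof (rule exI[of _ A], rule exI[of _ \<phi>], rule exI[of _ \<Theta>], rule exI[of _ \<theta>s], rule exI[of _ pref], intro conjI allI impI)
    show "is_instance d A \<phi> \<Theta> \<theta>s pref \<eta>" by (rule inst)
    show "\<exists>p. is_opt_policy A (\<lambda>a. inner_d d \<theta>s (\<phi> a)) pref \<eta> p"
      using popt unfolding r_def by blast
    fix q assume "is_opt_policy A (\<lambda>a. inner_d d \<theta>s (\<phi> a)) pref \<eta> q"
    hence qp: "q = p" using uniq unfolding r_def by blast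
    show "conc_coef A pref q \<le> 1 * C" using conc qp by simp
    show "ereal (1 * C * real d) \<le> D2_pi A (lin_class d \<phi> \<Theta>) pref q"
      using D2p qp F_def by simp
    have "real d * conc_coef A pref p \<le> C * real d" using conc dpos by (simp add: mult.commute)
    thus "ereal (1 * real d * conc_coef A pref q) \<le> D2_pi A (lin_class d \<phi> \<Theta>) pref q"
      using D2p qp F_def by (simp del: ereal_less_eq) (metis ereal_less_eq(3) order_trans)
  qed
 qed
 show ?thesis using R zero_less_one by blast
qed

end
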